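(* For every $\varepsilon>0$, the integrality gap of the cluster LP is at least $4/3-\varepsilon$; that is, there exists a Correlation Clustering instance whose optimum clustering cost $\mathrm{opt}$ satisfies $\mathrm{opt}\ge(4/3-\varepsilon)\cdot\mathrm{LP}^*$, where $\mathrm{LP}^*>0$ is the optimum value of the cluster LP for that instance.
   Context: A Correlation Clustering instance consists of a finite vertex set $V$ and a partition $E^+\uplus E^-=\binom V2$ of the unordered pairs of distinct vertices into $+$edges and $-$edges. A clustering is a partition of $V$; its cost is the number of $+$edges whose endpoints lie in different parts plus the number of $-$edges whose endpoints lie in the same part; $\mathrm{opt}$ is the minimum cost. For $x\in[0,1]^{\binom V2}$, $\mathrm{obj}(x)=\sum_{uv\in E^+}x_{uv}+\sum_{uv\in E^-}(1-x_{uv})$. The cluster LP has a variable $z_S$ for every nonempty $S\subseteq V$ and $x_{uv}$ for every $uv\in\binom V2$; it minimizes $\mathrm{obj}(x)$ subject to $\sum_{S\ni u}z_S=1$ for all $u$, $\sum_{S\supseteq\{u,v\}}z_S=1-x_{uv}$ for all $uv$, and $z_S\ge0$. The integrality gap is the supremum over instances of $\mathrm{opt}$ divided by the optimum LP value. *)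

theory Defs
  imports Complex_Main "HOL-Library.Disjoint_Sets"
begin

definition pairs :: "'a set \<Rightarrow> 'a set set" where
  "pairs V = {e. e \<subseteq> V \<and> card e = 2}"

text \<open>An instance is (V, Ep) with V finite and Ep \<subseteq> pairs V the +edges;
  the -edges are pairs V - Ep.\<close>
definition cc_instance :: "'a set \<Rightarrow> 'a set set \<Rightarrow> bool" where
  "cc_instance V Ep \<longleftrightarrow> finite V \<and> Ep \<subseteq> pairs V"

definition cc_cost :: "'a set \<Rightarrow> 'a set set \<Rightarrow> 'a set set \<Rightarrow> nat" where
  "cc_cost V Ep C =
     card {e \<in> Ep. \<not> (\<exists>S\<in>C. e \<subseteq> S)}
   + card {e \<in> pairs V - Ep. \<exists>S\<in>C. e \<subseteq> S}"

definition cc_opt :: "'a set \<Rightarrow> 'a set set \<Rightarrow> nat" where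
  "cc_opt V Ep = Min {cc_cost V Ep C | C. partition_on V C}"

definition cc_obj :: "'a set \<Rightarrow> 'a set set \<Rightarrow> ('a set \<Rightarrow> real) \<Rightarrow> real" where
  "cc_obj V Ep x = (\<Sum>e\<in>Ep. x e) + (\<Sum>e\<in>pairs V - Ep. 1 - x e)"

definition cluster_lp_feasible ::
  "'a set \<Rightarrow> ('a set \<Rightarrow> real) \<Rightarrow> ('a set \<Rightarrow> real) \<Rightarrow> bool" where
  "cluster_lp_feasible V z x \<longleftrightarrow>
     (\<forall>S. S \<subseteq> V \<and> S \<noteq> {} \<longrightarrow> z S \<ge> 0)
   \<and> (\<forall>u\<in>V. (\<Sum>S\<in>{S. S \<subseteq> V \<and> S \<noteq> {} \<and> u \<in> S}. z S) = 1)
   \<and> (\<forall>e\<in>pairs V. (\<Sum>S\<in>{S. S \<subseteq> V \<and> e \<subseteq> S}. z S) = 1 - x e)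
   \<and> (\<forall>e\<in>pairs V. 0 \<le> x e \<and> x e \<le> 1)"

definition cluster_lp_opt :: "'a set \<Rightarrow> 'a set set \<Rightarrow> real" where
  "cluster_lp_opt V Ep = Inf {cc_obj V Ep x | z x. cluster_lp_feasible V z x}"

end

theory Submission
  imports Defs
begin

locale KM = fixes m :: nat assumes m4: "4 \<le> m"
begin

definition en :: "nat \<Rightarrow> nat set" where "en p = {p div m, p mod m}"
definition ed :: "nat set \<Rightarrow> nat" where "ed s = Min s * m + Max s"
definition S2 :: "nat set set" where "S2 = {s. s \<subseteq> {..<m} \<and> card s = 2}"
definition S3 :: "nat set set" where "S3 = {s. s \<subseteq> {..<m} \<and> card s = 3}"
definition VV :: "nat set" where "VV = ed ` S2"
definition EE :: "nat set set" where
  "EE = {e. \<exists>p\<in>VV. \<exists>q\<in>VV. e = {p,q} \<and> p \<noteq> q \<and> en p \<inter> en q \<noteq> {}}"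

lemma en_ed: assumes "s \<in> S2" shows "en (ed s) = s"
proof -
  obtain a b where s: "s = {a,b}" "a \<noteq> b" using assms unfolding S2_def by (auto simp: card_2_iff)
  have ab: "a < m" "b < m" using assms s unfolding S2_def by auto
  show ?thesis
  proof (cases "a < b")
    case True
    have "Min s = a" "Max s = b" using True s by auto
    then show ?thesis using ab True s by (simp add: en_def ed_def)
  next
    case False
    then have "b < a" using s by auto
    then have "Min s = b" "Max s = a" using s by auto
    then show ?thesis using ab s by (auto simp add: en_def ed_def)
  qed
qed

lemma enVV: assumes "p \<in> VV" shows "en p \<in> S2" "ed (en p) = p"
  using assms en_ed unfolding VV_def by auto

lemma en_inj: "p \<in> VV \<Longrightarrow> q \<in> VV \<Longrightarrow> en p = en q \<Longrightarrow> p = q"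
  by (metis enVV(2))

lemma edVV: "s \<in> S2 \<Longrightarrow> ed s \<in> VV" unfolding VV_def by auto

lemma finS2: "finite S2" unfolding S2_def by (rule finite_subset[of _ "Pow {..<m}"]) auto
lemma finS3: "finite S3" unfolding S3_def by (rule finite_subset[of _ "Pow {..<m}"]) auto
lemma finVV: "finite VV" unfolding VV_def using finS2 by auto

lemma cardS2: "card S2 = m choose 2" unfolding S2_def using n_subsets[of "{..<m}" 2] by simp
lemma cardS3: "card S3 = m choose 3" unfolding S3_def using n_subsets[of "{..<m}" 3] by simp
lemma cardVV: "card VV = m choose 2"
proof -
  have "inj_on ed S2" by (rule inj_onI) (metis en_ed)
  then show ?thesis unfolding VV_def using card_image cardS2 by metis
qed

lemma en_card: "p \<in> VV \<Longrightarrow> card (en p) = 2" using enVV unfolding S2_def by auto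
lemma en_sub: "p \<in> VV \<Longrightarrow> en p \<subseteq> {..<m}" using enVV unfolding S2_def by auto

end

lemma card_int_le1:
  assumes "card A = 2" "card B = 2" "A \<noteq> B" shows "card (A \<inter> B) \<le> 1"
proof (rule ccontr)
  assume "\<not> ?thesis"
  then have c: "card (A \<inter> B) \<ge> 2" by simp
  have fA: "finite A" "finite B" using assms by (auto intro: card_ge_0_finite)
  have "A \<inter> B = A" using card_subset_eq[of A "A \<inter> B"] fA c assms
    by (metis Int_lower1 card_mono finite_Int le_antisym)
  moreover have "A \<inter> B = B" using card_subset_eq[of B "A \<inter> B"] fA c assms
    by (metis Int_lower2 card_mono finite_Int le_antisym)
  ultimately show False using assms by simp
qed

context KM begin

definition star :: "nat \<Rightarrow> nat set" where "star a = {p \<in> VV. a \<in> en p}"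
definition zz :: "nat set \<Rightarrow> real" where "zz S = (if S \<in> star ` {..<m} then 1/2 else 0)"
definition xx :: "nat set \<Rightarrow> real" where "xx e = 1 - (\<Sum>S\<in>{S. S \<subseteq> VV \<and> e \<subseteq> S}. zz S)"

lemma star_inj: "inj_on star {..<m}"
proof (rule inj_onI)
  fix a b assume ab: "a \<in> {..<m}" "b \<in> {..<m}" "star a = star b"
  show "a = b"
  proof (rule ccontr)
    assume ne: "a \<noteq> b"
    have "\<exists>c. c < m \<and> c \<noteq> a \<and> c \<noteq> b"
      using m4 by presburger
    then obtain c where c: "c < m" "c \<noteq> a" "c \<noteq> b" by blast
    have s: "{a,c} \<in> S2" using ab c unfolding S2_def by auto
    have "ed {a,c} \<in> star a" using edVV[OF s] en_ed[OF s] unfolding star_def by auto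
    moreover have "ed {a,c} \<notin> star b" using en_ed[OF s] c ne unfolding star_def by auto
    ultimately show False using ab by simp
  qed
qed

lemma sumz:
  assumes "B \<subseteq> VV" "B \<noteq> {}"
  shows "(\<Sum>S\<in>{S. S \<subseteq> VV \<and> B \<subseteq> S}. zz S) = card (\<Inter>(en ` B)) / 2"
proof -
  let ?A = "{S. S \<subseteq> VV \<and> B \<subseteq> S}"
  have finA: "finite ?A" by (rule finite_subset[of _ "Pow VV"]) (auto simp: finVV)
  have "(\<Sum>S\<in>?A. zz S) = (\<Sum>S\<in>?A \<inter> star ` {..<m}. 1/2)"
    unfolding zz_def using finA by (simp add: sum.If_cases)
  also have "?A \<inter> star ` {..<m} = star ` (\<Inter>(en ` B))"
  proof
    show "?A \<inter> star ` {..<m} \<subseteq> star ` (\<Inter>(en ` B))"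
      unfolding star_def by auto
    show "star ` (\<Inter>(en ` B)) \<subseteq> ?A \<inter> star ` {..<m}"
    proof
      fix S assume "S \<in> star ` (\<Inter>(en ` B))"
      then obtain a where a: "a \<in> \<Inter>(en ` B)" "S = star a" by auto
      obtain b where "b \<in> B" using assms by auto
      then have "a < m" using a assms en_sub by blast
      then show "S \<in> ?A \<inter> star ` {..<m}" using a assms unfolding star_def by auto
    qed
  qed
  also have "card (star ` (\<Inter>(en ` B))) = card (\<Inter>(en ` B))"
  proof -
    obtain b where "b \<in> B" using assms by auto
    then have "\<Inter>(en ` B) \<subseteq> {..<m}" using assms en_sub by blast
    then show ?thesis using star_inj by (meson card_image inj_on_subset)
  qed
  ultimately show ?thesis by simp
qed

lemma EE_pairs: "EE \<subseteq> pairs VV"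
  unfolding EE_def pairs_def by auto

lemma feasible: "cluster_lp_feasible VV zz xx"
proof -
  have 1: "\<forall>S. S \<subseteq> VV \<and> S \<noteq> {} \<longrightarrow> zz S \<ge> 0" unfolding zz_def by auto
  have 2: "\<forall>u\<in>VV. (\<Sum>S\<in>{S. S \<subseteq> VV \<and> S \<noteq> {} \<and> u \<in> S}. zz S) = 1"
  proof
    fix u assume u: "u \<in> VV"
    have "{S. S \<subseteq> VV \<and> S \<noteq> {} \<and> u \<in> S} = {S. S \<subseteq> VV \<and> {u} \<subseteq> S}" by auto
    then show "(\<Sum>S\<in>{S. S \<subseteq> VV \<and> S \<noteq> {} \<and> u \<in> S}. zz S) = 1"
      using sumz[of "{u}"] u en_card[OF u] by simp
  qed
  have 3: "\<forall>e\<in>pairs VV. (\<Sum>S\<in>{S. S \<subseteq> VV \<and> e \<subseteq> S}. zz S) = 1 - xx e"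
    unfolding xx_def by simp
  have 4: "\<forall>e\<in>pairs VV. 0 \<le> xx e \<and> xx e \<le> 1"
  proof
    fix e assume e: "e \<in> pairs VV"
    then obtain p q where pq: "e = {p,q}" "p \<noteq> q" "p \<in> VV" "q \<in> VV"
      unfolding pairs_def by (auto simp: card_2_iff)
    have "card (en p \<inter> en q) \<le> 1"
      using card_int_le1 en_card pq en_inj by metis
    then show "0 \<le> xx e \<and> xx e \<le> 1" unfolding xx_def using sumz[of e] pq by auto
  qed
  show ?thesis unfolding cluster_lp_feasible_def using 1 2 3 4 by blast
qed

lemma obj_val: "cc_obj VV EE xx = card EE / 2"
proof -
  have a: "xx e = 1/2" if eE: "e \<in> EE" for e
  proof -
    obtain p q where pq: "e = {p,q}" "p \<noteq> q" "p \<in> VV" "q \<in> VV" "en p \<inter> en q \<noteq> {}"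
      using eE unfolding EE_def by blast
    have "card (en p \<inter> en q) \<le> 1"
      using card_int_le1 en_card pq en_inj by metis
    moreover have "card (en p \<inter> en q) \<noteq> 0" using pq en_card
      by (metis card_0_eq card.infinite finite_Int zero_neq_numeral)
    ultimately have "card (en p \<inter> en q) = 1" by simp
    then show ?thesis unfolding xx_def using sumz[of e] pq by auto
  qed
  have b: "1 - xx e = 0" if eP: "e \<in> pairs VV - EE" for e
  proof -
    obtain p q where pq: "e = {p,q}" "p \<noteq> q" "p \<in> VV" "q \<in> VV"
      using eP unfolding pairs_def by (auto simp: card_2_iff)
    then have "en p \<inter> en q = {}" using eP unfolding EE_def by auto
    then show ?thesis unfolding xx_def using sumz[of e] pq by auto
  qed
  have "(\<Sum>e\<in>EE. xx e) = (\<Sum>e\<in>EE. 1/2)" using a by (rule sum.cong[OF refl])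
  moreover have "(\<Sum>e\<in>pairs VV - EE. 1 - xx e) = (\<Sum>e\<in>pairs VV - EE. 0)" using b by (rule sum.cong[OF refl])
  ultimately show ?thesis unfolding cc_obj_def by simp
qed

end

context KM begin

lemma obj_ge1:
  assumes f: "cluster_lp_feasible VV z x"
  shows "cc_obj VV EE x \<ge> 1"
proof -
  have s01: "{0,1} \<in> S2" "{1,2} \<in> S2" "{2,3} \<in> S2" using m4 unfolding S2_def by auto
  define p where "p = ed {0,1}"
  define q where "q = ed {1,2}"
  define r where "r = ed {2,3}"
  have V: "p \<in> VV" "q \<in> VV" "r \<in> VV" using edVV s01 p_def q_def r_def by auto
  have E: "en p = {0,1}" "en q = {1,2}" "en r = {2,3}" using en_ed s01 p_def q_def r_def by auto
  have "en p \<noteq> en q" "en q \<noteq> en r" "en p \<noteq> en r" unfolding E by (simp_all add: doubleton_eq_iff)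
  then have ne: "p \<noteq> q" "q \<noteq> r" "p \<noteq> r" by auto
  have pq: "{p,q} \<in> EE" using V E ne unfolding EE_def by blast
  have qr: "{q,r} \<in> EE" using V E ne unfolding EE_def by blast
  have pr: "{p,r} \<in> pairs VV - EE"
  proof -
    have "{p,r} \<in> pairs VV" using V ne unfolding pairs_def by auto
    moreover have "{p,r} \<notin> EE"
    proof
      assume "{p,r} \<in> EE"
      then obtain a b where ab: "{p,r} = {a,b}" "en a \<inter> en b \<noteq> {}" unfolding EE_def by blast
      then have "(a = p \<and> b = r) \<or> (a = r \<and> b = p)" by (metis doubleton_eq_iff)
      then have "en a \<inter> en b = en p \<inter> en r" by auto
      moreover have "en p \<inter> en r = {}" unfolding E by auto
      ultimately show False using ab(2) by simp
    qed
    ultimately show ?thesis by simp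
  qed
  have z0: "\<And>S. S \<subseteq> VV \<Longrightarrow> S \<noteq> {} \<Longrightarrow> z S \<ge> 0"
    and zu: "\<And>u. u \<in> VV \<Longrightarrow> (\<Sum>S\<in>{S. S \<subseteq> VV \<and> S \<noteq> {} \<and> u \<in> S}. z S) = 1"
    and ze: "\<And>e. e \<in> pairs VV \<Longrightarrow> (\<Sum>S\<in>{S. S \<subseteq> VV \<and> e \<subseteq> S}. z S) = 1 - x e"
    and x01: "\<And>e. e \<in> pairs VV \<Longrightarrow> 0 \<le> x e \<and> x e \<le> 1"
    using f unfolding cluster_lp_feasible_def by auto
  have fin: "\<And>P. finite {S. S \<subseteq> VV \<and> P S}"
    by (rule finite_subset[of _ "Pow VV"]) (auto simp: finVV)
  let ?A = "{S. S \<subseteq> VV \<and> {p,q} \<subseteq> S}"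
  let ?B = "{S. S \<subseteq> VV \<and> {q,r} \<subseteq> S}"
  let ?C = "{S. S \<subseteq> VV \<and> {p,r} \<subseteq> S}"
  let ?Q = "{S. S \<subseteq> VV \<and> S \<noteq> {} \<and> q \<in> S}"
  have pqP: "{p,q} \<in> pairs VV" "{q,r} \<in> pairs VV" using pq qr EE_pairs by auto
  have "sum z ?A + sum z ?B = sum z (?A \<union> ?B) + sum z (?A \<inter> ?B)"
    using fin[of "\<lambda>S. {p,q} \<subseteq> S"] fin[of "\<lambda>S. {q,r} \<subseteq> S"] by (rule sum.union_inter[symmetric])
  also have "sum z (?A \<union> ?B) \<le> sum z ?Q"
    by (rule sum_mono2) (use fin[of "\<lambda>S. S \<noteq> {} \<and> q \<in> S"] z0 in auto)
  also have "sum z (?A \<inter> ?B) \<le> sum z ?C"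
    by (rule sum_mono2) (use fin[of "\<lambda>S. {p,r} \<subseteq> S"] z0 in auto)
  finally have tri: "(1 - x {p,q}) + (1 - x {q,r}) \<le> 1 + (1 - x {p,r})"
    using ze[OF pqP(1)] ze[OF pqP(2)] ze[of "{p,r}"] pr zu[OF V(2)] by simp
  have "x {p,q} + x {q,r} = sum x {{p,q},{q,r}}"
    using ne by (simp add: doubleton_eq_iff)
  also have "\<dots> \<le> sum x EE"
    by (rule sum_mono2) (use finVV pq qr x01 EE_pairs in \<open>auto simp: finite_subset[OF EE_pairs] pairs_def\<close>)
  finally have h1: "x {p,q} + x {q,r} \<le> sum x EE" .
  have h2: "1 - x {p,r} \<le> (\<Sum>e\<in>pairs VV - EE. 1 - x e)"
    by (rule member_le_sum) (use pr x01 finVV in \<open>auto simp: pairs_def\<close>)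
  show ?thesis unfolding cc_obj_def using h1 h2 tri by linarith
qed

end

context KM begin

lemma lp_bounds: "1 \<le> cluster_lp_opt VV EE" "cluster_lp_opt VV EE \<le> card EE / 2"
proof -
  let ?X = "{cc_obj VV EE x | z x. cluster_lp_feasible VV z x}"
  have mem: "card EE / 2 \<in> ?X" using feasible obj_val by (metis (mono_tags, lifting) mem_Collect_eq)
  have lb: "\<forall>y\<in>?X. 1 \<le> y" using obj_ge1 by blast
  show "1 \<le> cluster_lp_opt VV EE" unfolding cluster_lp_opt_def
    by (rule cInf_greatest) (use mem lb in auto)
  show "cluster_lp_opt VV EE \<le> card EE / 2" unfolding cluster_lp_opt_def
    by (rule cInf_lower[OF mem]) (use lb in \<open>auto simp: bdd_below_def\<close>)
qed

definition Tri :: "(nat \<Rightarrow> 'b) \<Rightarrow> nat set \<Rightarrow> nat set set" where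
  "Tri cl W = {T\<in>S3. (\<forall>p\<in>VV. en p \<subseteq> T \<longrightarrow> p \<in> W) \<and>
      (\<forall>p\<in>VV. \<forall>q\<in>VV. en p \<subseteq> T \<longrightarrow> en q \<subseteq> T \<longrightarrow> cl p = cl q)}"
definition Dis :: "(nat \<Rightarrow> 'b) \<Rightarrow> nat set \<Rightarrow> nat set set" where
  "Dis cl W = {e. \<exists>p\<in>W. \<exists>q\<in>W. e = {p,q} \<and> en p \<inter> en q = {} \<and> cl p = cl q}"

lemma TriS3: "T \<in> Tri cl W \<Longrightarrow> T \<in> S3" unfolding Tri_def by simp
lemma TriD1: "T \<in> Tri cl W \<Longrightarrow> p \<in> VV \<Longrightarrow> en p \<subseteq> T \<Longrightarrow> p \<in> W"
  unfolding Tri_def mem_Collect_eq by blast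
lemma TriD2: "T \<in> Tri cl W \<Longrightarrow> p \<in> VV \<Longrightarrow> q \<in> VV \<Longrightarrow> en p \<subseteq> T \<Longrightarrow> en q \<subseteq> T \<Longrightarrow> cl p = cl q"
  unfolding Tri_def mem_Collect_eq by blast

lemma S3_minus: assumes "T \<in> S3" "a \<in> T" shows "T - {a} \<in> S2"
  using assms unfolding S2_def S3_def by (auto simp: card_Diff_singleton)

lemma finTri: "finite (Tri cl W)" using finS3 unfolding Tri_def by auto
lemma finDis: "finite W \<Longrightarrow> finite (Dis cl W)"
  unfolding Dis_def by (rule finite_subset[of _ "Pow W"]) auto

lemma caseB:
  assumes W: "W \<subseteq> VV" and B: "\<And>a k. card {p\<in>W. a \<in> en p \<and> cl p = k} \<le> 3"
  shows "card (Tri cl W) \<le> 2 * card W"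
proof -
  have finW: "finite W" using W finVV finite_subset by blast
  have sub: "Tri cl W \<subseteq> (\<Union>p\<in>W. {T\<in>Tri cl W. en p \<subseteq> T})"
  proof
    fix T assume T: "T \<in> Tri cl W"
    then have T3: "T \<in> S3" by (rule TriS3)
    then obtain a where "a \<in> T" unfolding S3_def by fastforce
    then have s: "T - {a} \<in> S2" using S3_minus T3 by auto
    have "ed (T - {a}) \<in> W" by (rule TriD1[OF T edVV[OF s]]) (use en_ed[OF s] in auto)
    moreover have "en (ed (T - {a})) \<subseteq> T" using en_ed[OF s] by auto
    ultimately show "T \<in> (\<Union>p\<in>W. {T\<in>Tri cl W. en p \<subseteq> T})" using T by blast
  qed
  have fib: "card {T\<in>Tri cl W. en p \<subseteq> T} \<le> 2" if p: "p \<in> W" for p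
  proof -
    have pV: "p \<in> VV" using p W by auto
    obtain a b where ab: "en p = {a,b}" "a \<noteq> b" using en_card[OF pV] by (auto simp: card_2_iff)
    let ?F = "{T\<in>Tri cl W. en p \<subseteq> T}"
    let ?g = "\<lambda>T. ed (T - {b})"
    let ?R = "{q\<in>W. a \<in> en q \<and> cl q = cl p}"
    have inj: "inj_on ?g ?F"
    proof (rule inj_onI)
      fix T T' assume T: "T \<in> ?F" and T': "T' \<in> ?F" and eq: "?g T = ?g T'"
      have TT: "T \<in> Tri cl W" "T' \<in> Tri cl W" "b \<in> T" "b \<in> T'" using T T' ab by auto
      have s: "T - {b} \<in> S2" "T' - {b} \<in> S2"
        using S3_minus[OF TriS3[OF TT(1)] TT(3)] S3_minus[OF TriS3[OF TT(2)] TT(4)] by auto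
      have "T - {b} = T' - {b}" using eq en_ed[OF s(1)] en_ed[OF s(2)] by metis
      moreover have "b \<in> T" "b \<in> T'" using T T' ab by auto
      ultimately show "T = T'" by (metis insert_Diff)
    qed
    have img: "?g ` ?F \<subseteq> ?R - {p}"
    proof
      fix q assume "q \<in> ?g ` ?F"
      then obtain T where T: "T \<in> ?F" and q: "q = ?g T" by blast
      have TT: "T \<in> Tri cl W" "b \<in> T" using T ab by auto
      have s: "T - {b} \<in> S2" using S3_minus[OF TriS3[OF TT(1)] TT(2)] .
      have e: "en q = T - {b}" using en_ed[OF s] q by simp
      have qV: "q \<in> VV" using edVV[OF s] q by simp
      have Tr: "T \<in> Tri cl W" "en p \<subseteq> T" using T by auto
      have eqT: "en q \<subseteq> T" using e by auto
      have "q \<in> W" by (rule TriD1[OF Tr(1) qV eqT])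
      moreover have "cl q = cl p" by (rule TriD2[OF Tr(1) qV pV eqT Tr(2)])
      moreover have "a \<in> en q" using e ab Tr by auto
      moreover have "q \<noteq> p" using e ab by auto
      ultimately show "q \<in> ?R - {p}" by auto
    qed
    have "card ?F = card (?g ` ?F)" using inj by (simp add: card_image)
    also have "\<dots> \<le> card (?R - {p})" by (rule card_mono) (use finW img in auto)
    also have "\<dots> = card ?R - 1" using p ab by (simp add: card_Diff_singleton)
    also have "\<dots> \<le> 2" using B[of a "cl p"] by simp
    finally show ?thesis .
  qed
  have "card (Tri cl W) \<le> card (\<Union>p\<in>W. {T\<in>Tri cl W. en p \<subseteq> T})"
    by (rule card_mono) (use sub finW finTri[of cl W] in auto)
  also have "\<dots> \<le> (\<Sum>p\<in>W. card {T\<in>Tri cl W. en p \<subseteq> T})" by (rule card_UN_le[OF finW])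
  also have "\<dots> \<le> (\<Sum>p\<in>W. 2)" by (rule sum_mono) (use fib in auto)
  finally show ?thesis by simp
qed

end

context KM begin

lemma L1:
  assumes "W \<subseteq> VV"
  shows "2 * card (Tri cl W) \<le> card (Dis cl W) + 4 * card W"
  using assms
proof (induction "card W" arbitrary: W rule: less_induct)
  case less
  have W: "W \<subseteq> VV" by fact
  have finW: "finite W" using W finVV finite_subset by blast
  show ?case
  proof (cases "\<exists>a k. 4 \<le> card {p\<in>W. a \<in> en p \<and> cl p = k}")
    case False
    have "card {p\<in>W. a \<in> en p \<and> cl p = k} \<le> 3" for a k
    proof -
      have "\<not> 4 \<le> card {p\<in>W. a \<in> en p \<and> cl p = k}" using False by blast
      then show ?thesis by linarith
    qed
    then have "card (Tri cl W) \<le> 2 * card W" using caseB W by blast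
    then show ?thesis by simp
  next
    case True
    then obtain a k where A4: "4 \<le> card {p\<in>W. a \<in> en p \<and> cl p = k}" by blast
    define A where "A = {p\<in>W. a \<in> en p \<and> cl p = k}"
    define W' where "W' = W - A"
    define F' where "F' = {q\<in>W'. cl q = k}"
    have A4': "4 \<le> card A" using A4 A_def by simp
    have finA: "finite A" "finite W'" "finite F'" using finW unfolding A_def W'_def F'_def by auto
    have AW: "A \<subseteq> W" unfolding A_def by auto
    have Ane: "A \<noteq> {}" using A4' by auto
    have W'V: "W' \<subseteq> VV" using W unfolding W'_def by auto
    have cardW': "card W' < card W"
    proof -
      have "card W' = card W - card A" unfolding W'_def using AW finW by (simp add: card_Diff_subset finite_subset)
      moreover have "card A > 0" using A4' by simp
      moreover have "card A \<le> card W" using AW finW card_mono by blast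
      ultimately show ?thesis by linarith
    qed
    have IH: "2 * card (Tri cl W') \<le> card (Dis cl W') + 4 * card W'"
      using less.hyps[OF cardW' W'V] .
    have W'le: "card W' \<le> card W" using cardW' by simp
    have F'le: "card F' \<le> card W'" unfolding F'_def by (rule card_mono[OF finA(2)]) auto
    define Y where "Y = {T\<in>Tri cl W. a \<in> T \<and> (\<forall>p\<in>VV. en p \<subseteq> T \<longrightarrow> cl p = k)}"
    have sub1: "Tri cl W \<subseteq> Tri cl W' \<union> Y"
    proof
      fix T assume T: "T \<in> Tri cl W"
      show "T \<in> Tri cl W' \<union> Y"
      proof (cases "\<exists>p\<in>VV. en p \<subseteq> T \<and> p \<in> A")
        case True
        then obtain p where p: "p \<in> VV" "en p \<subseteq> T" "p \<in> A" by blast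
        then have "a \<in> T" "cl p = k" unfolding A_def by auto
        moreover have "\<forall>q\<in>VV. en q \<subseteq> T \<longrightarrow> cl q = k" using TriD2[OF T _ p(1) _ p(2)] \<open>cl p = k\<close> by auto
        ultimately show ?thesis using T unfolding Y_def by auto
      next
        case False
        have "\<forall>p\<in>VV. en p \<subseteq> T \<longrightarrow> p \<in> W'" using False TriD1[OF T] unfolding W'_def by blast
        moreover have "\<forall>p\<in>VV. \<forall>q\<in>VV. en p \<subseteq> T \<longrightarrow> en q \<subseteq> T \<longrightarrow> cl p = cl q" using TriD2[OF T] by blast
        ultimately have "T \<in> Tri cl W'" using TriS3[OF T] unfolding Tri_def by blast
        then show ?thesis by simp
      qed
    qed
    have cardY: "card Y \<le> card F'"
    proof -
      let ?g = "\<lambda>T. ed (T - {a})"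
      have inj: "inj_on ?g Y"
      proof (rule inj_onI)
        fix T T' assume T: "T \<in> Y" and T': "T' \<in> Y" and eq: "?g T = ?g T'"
        have TT: "T \<in> Tri cl W" "T' \<in> Tri cl W" "a \<in> T" "a \<in> T'" using T T' unfolding Y_def by auto
        have s: "T - {a} \<in> S2" "T' - {a} \<in> S2"
          using S3_minus[OF TriS3[OF TT(1)] TT(3)] S3_minus[OF TriS3[OF TT(2)] TT(4)] by auto
        have "T - {a} = T' - {a}" using eq en_ed[OF s(1)] en_ed[OF s(2)] by metis
        moreover have "a \<in> T" "a \<in> T'" using T T' unfolding Y_def by auto
        ultimately show "T = T'" by (metis insert_Diff)
      qed
      have img: "?g ` Y \<subseteq> F'"
      proof
        fix q assume "q \<in> ?g ` Y"
        then obtain T where T: "T \<in> Y" and q: "q = ?g T" by blast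
        have TT: "T \<in> Tri cl W" "a \<in> T" using T unfolding Y_def by auto
        have s: "T - {a} \<in> S2" using S3_minus[OF TriS3[OF TT(1)] TT(2)] .
        have e: "en q = T - {a}" using en_ed[OF s] q by simp
        have qV: "q \<in> VV" using edVV[OF s] q by simp
        have Ty: "T \<in> Tri cl W" "\<forall>p\<in>VV. en p \<subseteq> T \<longrightarrow> cl p = k" using T unfolding Y_def by auto
        have eqT: "en q \<subseteq> T" using e by auto
        have "q \<in> W" by (rule TriD1[OF Ty(1) qV eqT])
        moreover have "cl q = k" using Ty(2) qV eqT by blast
        moreover have "q \<notin> A" using e unfolding A_def by auto
        ultimately show "q \<in> F'" unfolding F'_def W'_def by auto
      qed
      have "card Y = card (?g ` Y)" using inj by (simp add: card_image)
      also have "\<dots> \<le> card F'" by (rule card_mono[OF finA(3) img])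
      finally show ?thesis .
    qed
    have cTri: "card (Tri cl W) \<le> card (Tri cl W') + card Y"
    proof -
      have "card (Tri cl W) \<le> card (Tri cl W' \<union> Y)"
        by (rule card_mono[OF _ sub1]) (use finTri in \<open>auto simp: Y_def\<close>)
      also have "\<dots> \<le> card (Tri cl W') + card Y" by (rule card_Un_le)
      finally show ?thesis .
    qed
    define X where "X = (\<lambda>(q,p). {p,q}) ` (SIGMA q:F'. {p\<in>A. en p \<inter> en q = {}})"
    have AF: "A \<inter> F' = {}" unfolding F'_def W'_def by auto
    have cardX: "card X \<ge> 2 * card F'"
    proof -
      have inj: "inj_on (\<lambda>(q,p). {p,q}) (SIGMA q:F'. {p\<in>A. en p \<inter> en q = {}})"
      proof (rule inj_onI)
        fix u v assume u: "u \<in> (SIGMA q:F'. {p\<in>A. en p \<inter> en q = {}})"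
          and v: "v \<in> (SIGMA q:F'. {p\<in>A. en p \<inter> en q = {}})"
          and eq: "(\<lambda>(q,p). {p,q}) u = (\<lambda>(q,p). {p,q}) v"
        obtain q p q' p' where uv: "u = (q,p)" "v = (q',p')" by fastforce
        have m: "q \<in> F'" "p \<in> A" "q' \<in> F'" "p' \<in> A" using u v uv by auto
        have "{p,q} = {p',q'}" using eq uv by simp
        then have "p = p' \<and> q = q'" using m AF by (metis disjoint_iff doubleton_eq_iff)
        then show "u = v" using uv by simp
      qed
      have fibq: "card {p\<in>A. en p \<inter> en q = {}} \<ge> card A - 2" if q: "q \<in> F'" for q
      proof -
        have qV: "q \<in> VV" using q W unfolding F'_def W'_def by auto
        have anq: "a \<notin> en q" using q unfolding F'_def W'_def A_def by auto
        have bad: "{p\<in>A. en p \<inter> en q \<noteq> {}} \<subseteq> (\<lambda>c. ed {a,c}) ` en q"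
        proof
          fix p assume p: "p \<in> {p\<in>A. en p \<inter> en q \<noteq> {}}"
          then obtain c where c: "c \<in> en p" "c \<in> en q" by auto
          have pV: "p \<in> VV" "a \<in> en p" using p W unfolding A_def by auto
          have "c \<noteq> a" using c anq by auto
          have fp: "finite (en p)" using en_card[OF pV(1)] by (auto intro: card_ge_0_finite)
          have "{a,c} \<subseteq> en p" using pV(2) c(1) by auto
          moreover have "card {a,c} = card (en p)" using en_card[OF pV(1)] \<open>c \<noteq> a\<close> by simp
          ultimately have "en p = {a,c}" using card_subset_eq[OF fp] by metis
          then have "p = ed {a,c}" using enVV(2)[OF pV(1)] by simp
          then show "p \<in> (\<lambda>c. ed {a,c}) ` en q" using c by auto
        qed
        have "card {p\<in>A. en p \<inter> en q \<noteq> {}} \<le> card (en q)"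
        proof -
          have fq: "finite (en q)" using en_card[OF qV] by (auto intro: card_ge_0_finite)
          have "card {p\<in>A. en p \<inter> en q \<noteq> {}} \<le> card ((\<lambda>c. ed {a,c}) ` en q)"
            using card_mono[OF finite_imageI[OF fq] bad] .
          also have "\<dots> \<le> card (en q)" by (rule card_image_le[OF fq])
          finally show ?thesis .
        qed
        then have le2: "card {p\<in>A. en p \<inter> en q \<noteq> {}} \<le> 2" using en_card[OF qV] by simp
        have "card A = card {p\<in>A. en p \<inter> en q = {}} + card {p\<in>A. en p \<inter> en q \<noteq> {}}"
        proof -
          have "A = {p\<in>A. en p \<inter> en q = {}} \<union> {p\<in>A. en p \<inter> en q \<noteq> {}}" by auto
          then have "card A = card ({p\<in>A. en p \<inter> en q = {}} \<union> {p\<in>A. en p \<inter> en q \<noteq> {}})" by simp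
          also have "\<dots> = card {p\<in>A. en p \<inter> en q = {}} + card {p\<in>A. en p \<inter> en q \<noteq> {}}"
            by (rule card_Un_disjoint) (use finA(1) in auto)
          finally show ?thesis .
        qed
        then show ?thesis using le2 by linarith
      qed
      have "card X = card (SIGMA q:F'. {p\<in>A. en p \<inter> en q = {}})"
        unfolding X_def using inj by (simp add: card_image)
      also have "\<dots> = (\<Sum>q\<in>F'. card {p\<in>A. en p \<inter> en q = {}})"
        using finA by (simp add: card_SigmaI)
      also have "\<dots> \<ge> (\<Sum>q\<in>F'. card A - 2)" by (rule sum_mono) (use fibq in auto)
      finally have "card X \<ge> card F' * (card A - 2)" by simp
      moreover have "card F' * (card A - 2) \<ge> card F' * 2" using A4' by (intro mult_left_mono) auto
      ultimately show ?thesis by linarith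
    qed
    have sub2: "Dis cl W' \<union> X \<subseteq> Dis cl W"
    proof
      fix e assume "e \<in> Dis cl W' \<union> X"
      then show "e \<in> Dis cl W"
      proof
        assume "e \<in> Dis cl W'" then show ?thesis unfolding Dis_def W'_def by blast
      next
        assume "e \<in> X"
        then obtain q p where "q \<in> F'" "p \<in> A" "en p \<inter> en q = {}" "e = {p,q}" unfolding X_def by auto
        then show ?thesis unfolding Dis_def F'_def W'_def A_def by auto
      qed
    qed
    have disj: "Dis cl W' \<inter> X = {}"
    proof -
      have "\<forall>e\<in>Dis cl W'. e \<subseteq> W'" unfolding Dis_def by auto
      moreover have "\<forall>e\<in>X. e \<inter> A \<noteq> {}" unfolding X_def by auto
      ultimately show ?thesis unfolding W'_def by blast
    qed
    have finX: "finite X" unfolding X_def using finA by auto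
    have cDis: "card (Dis cl W') + card X \<le> card (Dis cl W)"
      using card_Un_disjoint[OF finDis[OF finA(2)] finX disj] card_mono[OF finDis[OF finW] sub2] by simp
    show ?thesis using IH cTri cardY cDis cardX W'le by linarith
  qed
qed

end

lemma card_fibres:
  assumes "finite A" "finite B" "f ` A \<subseteq> B"
  shows "card A = (\<Sum>y\<in>B. card {x\<in>A. f x = y})"
proof -
  have "A = (\<Union>y\<in>B. {x\<in>A. f x = y})" using assms(3) by auto
  then have "card A = card (\<Union>y\<in>B. {x\<in>A. f x = y})" by simp
  also have "\<dots> = (\<Sum>y\<in>B. card {x\<in>A. f x = y})"
    by (rule card_UN_disjoint) (use assms in auto)
  finally show ?thesis .
qed

lemma card3_le: "card {a,b,c} \<le> 3"
  by (auto simp: card_insert_if)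

lemma three_pairs_le1:
  assumes "\<not> (f x = f y \<and> f y = f w)"
  shows "card {e\<in>{{x,y},{x,w},{y,w}}. \<forall>p\<in>e. \<forall>q\<in>e. f p = f q} \<le> 1"
proof -
  let ?S = "{e\<in>{{x,y},{x,w},{y,w}}. \<forall>p\<in>e. \<forall>q\<in>e. f p = f q}"
  let ?Z = "if f x = f y then {{x,y}} else if f x = f w then {{x,w}} else if f y = f w then {{y,w}} else {}"
  have SZ: "?S \<subseteq> ?Z"
  proof
    fix e assume e: "e \<in> ?S"
    then have P: "\<forall>p\<in>e. \<forall>q\<in>e. f p = f q" by blast
    from e have "e = {x,y} \<or> e = {x,w} \<or> e = {y,w}" by blast
    then show "e \<in> ?Z"
    proof (elim disjE)
      assume "e = {x,y}" then have "f x = f y" using P by blast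
      then show ?thesis using \<open>e = {x,y}\<close> by simp
    next
      assume "e = {x,w}" then have "f x = f w" using P by blast
      then show ?thesis using \<open>e = {x,w}\<close> assms by auto
    next
      assume "e = {y,w}" then have "f y = f w" using P by blast
      then show ?thesis using \<open>e = {y,w}\<close> assms by auto
    qed
  qed
  have c1: "card ?Z \<le> 1" by simp
  have fZ: "finite ?Z" by simp
  show ?thesis using card_mono[OF fZ SZ] c1 by linarith
qed

lemma sub1_le1: "A \<subseteq> {z} \<Longrightarrow> card A \<le> 1"
  using card_mono[of "{z}" A] by simp

context KM begin

definition tri :: "nat set \<Rightarrow> nat set" where "tri e = \<Union>(en ` e)"

lemma edges_of_T:
  assumes "a \<noteq> b" "a \<noteq> c" "b \<noteq> c" "{a,b,c} \<subseteq> {..<m}" "p \<in> VV" "en p \<subseteq> {a,b,c}"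
  shows "p = ed {a,b} \<or> p = ed {a,c} \<or> p = ed {b,c}"
proof -
  obtain u v where uv: "en p = {u,v}" "u \<noteq> v" using en_card[OF assms(5)] by (auto simp: card_2_iff)
  then have "en p = {a,b} \<or> en p = {a,c} \<or> en p = {b,c}" using assms(6) by (auto simp: doubleton_eq_iff)
  then show ?thesis using enVV(2)[OF assms(5)] by metis
qed

lemma EEI: "p \<in> VV \<Longrightarrow> q \<in> VV \<Longrightarrow> p \<noteq> q \<Longrightarrow> en p \<inter> en q \<noteq> {} \<Longrightarrow> {p,q} \<in> EE"
  unfolding EE_def by blast

lemma fiber:
  assumes "a \<noteq> b" "a \<noteq> c" "b \<noteq> c" "{a,b,c} \<subseteq> {..<m}"
  defines "x \<equiv> ed {a,b}" and "y \<equiv> ed {a,c}" and "w \<equiv> ed {b,c}"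
  shows "{e\<in>EE. tri e = {a,b,c}} = {{x,y},{x,w},{y,w}}"
    and "x \<in> VV" "y \<in> VV" "w \<in> VV" "x \<noteq> y" "x \<noteq> w" "y \<noteq> w"
    and "en x = {a,b}" "en y = {a,c}" "en w = {b,c}"
proof -
  have s: "{a,b} \<in> S2" "{a,c} \<in> S2" "{b,c} \<in> S2" using assms(1-4) unfolding S2_def by auto
  show E: "en x = {a,b}" "en y = {a,c}" "en w = {b,c}" using en_ed s x_def y_def w_def by auto
  show V: "x \<in> VV" "y \<in> VV" "w \<in> VV" using edVV s x_def y_def w_def by auto
  show N: "x \<noteq> y" "x \<noteq> w" "y \<noteq> w" using E assms(1-3) by (auto simp: doubleton_eq_iff)
  show "{e\<in>EE. tri e = {a,b,c}} = {{x,y},{x,w},{y,w}}"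
  proof
    show "{e\<in>EE. tri e = {a,b,c}} \<subseteq> {{x,y},{x,w},{y,w}}"
    proof
      fix e assume e: "e \<in> {e\<in>EE. tri e = {a,b,c}}"
      then obtain p q where pq: "e = {p,q}" "p \<in> VV" "q \<in> VV" "p \<noteq> q" unfolding EE_def by blast
      have "en p \<subseteq> {a,b,c}" "en q \<subseteq> {a,b,c}" using e pq unfolding tri_def by auto
      then have "p \<in> {x,y,w}" "q \<in> {x,y,w}" using edges_of_T[OF assms(1-4)] pq x_def y_def w_def by blast+
      then show "e \<in> {{x,y},{x,w},{y,w}}" using pq by auto
    qed
    have "{x,y} \<in> EE" by (rule EEI) (use E V N in auto)
    moreover have "{x,w} \<in> EE" by (rule EEI) (use E V N in auto)
    moreover have "{y,w} \<in> EE" by (rule EEI) (use E V N in auto)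
    ultimately show "{{x,y},{x,w},{y,w}} \<subseteq> {e\<in>EE. tri e = {a,b,c}}"
      using E unfolding tri_def by auto
  qed
qed

lemma tri_S3: assumes "e \<in> EE" shows "tri e \<in> S3"
proof -
  obtain p q where pq: "e = {p,q}" "p \<in> VV" "q \<in> VV" "p \<noteq> q" "en p \<inter> en q \<noteq> {}"
    using assms unfolding EE_def by blast
  have c: "card (en p) = 2" "card (en q) = 2" using en_card pq by auto
  have ne: "en p \<noteq> en q" using en_inj pq by auto
  have "card (en p \<inter> en q) \<le> 1" using card_int_le1 c ne by blast
  moreover have "card (en p \<inter> en q) \<noteq> 0" using pq c
    by (metis card_0_eq card.infinite finite_Int zero_neq_numeral)
  ultimately have i1: "card (en p \<inter> en q) = 1" by simp
  have fin: "finite (en p)" "finite (en q)" using c by (auto intro: card_ge_0_finite)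
  have "card (en p \<union> en q) = 3" using card_Un_Int[OF fin] c i1 by simp
  moreover have "tri e = en p \<union> en q" unfolding tri_def pq by auto
  moreover have "en p \<union> en q \<subseteq> {..<m}" using en_sub pq by auto
  ultimately show ?thesis unfolding S3_def by auto
qed

lemma finEE: "finite EE"
proof -
  have "pairs VV \<subseteq> Pow VV" unfolding pairs_def by auto
  then have "finite (pairs VV)" using finVV finite_subset by blast
  then show ?thesis using EE_pairs finite_subset by blast
qed

lemma card_EE: "card EE = 3 * card S3"
proof -
  have "card EE = (\<Sum>T\<in>S3. card {e\<in>EE. tri e = T})"
    by (rule card_fibres[OF finEE finS3]) (use tri_S3 in auto)
  also have "\<dots> = (\<Sum>T\<in>S3. 3)"
  proof (rule sum.cong[OF refl])
    fix T assume "T \<in> S3"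
    then obtain a b c where T: "T = {a,b,c}" "a \<noteq> b" "b \<noteq> c" "a \<noteq> c" "{a,b,c} \<subseteq> {..<m}"
      unfolding S3_def by (auto simp: card_3_iff)
    show "card {e\<in>EE. tri e = T} = 3"
      using fiber[of a b c] T by (auto simp: doubleton_eq_iff)
  qed
  finally show ?thesis by simp
qed

definition Pin :: "(nat \<Rightarrow> 'b) \<Rightarrow> nat set set" where
  "Pin cl = {e\<in>EE. \<forall>p\<in>e. \<forall>q\<in>e. cl p = cl q}"

lemma card_Pin: "card (Pin cl) \<le> card S3 + 2 * card (Tri cl VV)"
proof -
  have finP: "finite (Pin cl)" using finEE unfolding Pin_def by auto
  have "card (Pin cl) = (\<Sum>T\<in>S3. card {e\<in>Pin cl. tri e = T})"
    by (rule card_fibres[OF finP finS3]) (use tri_S3 in \<open>auto simp: Pin_def\<close>)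
  also have "\<dots> \<le> (\<Sum>T\<in>S3. 1 + (if T \<in> Tri cl VV then 2 else 0))"
  proof (rule sum_mono)
    fix T assume "T \<in> S3"
    then obtain a b c where T: "T = {a,b,c}" "a \<noteq> b" "b \<noteq> c" "a \<noteq> c" "{a,b,c} \<subseteq> {..<m}"
      unfolding S3_def by (auto simp: card_3_iff)
    define x where "x = ed {a,b}"
    define y where "y = ed {a,c}"
    define w where "w = ed {b,c}"
    note fb = fiber[of a b c, folded x_def y_def w_def, OF T(2) T(4) T(3) T(5)]
    have sub: "{e\<in>Pin cl. tri e = T} \<subseteq> {e\<in>{{x,y},{x,w},{y,w}}. \<forall>p\<in>e. \<forall>q\<in>e. cl p = cl q}"
      using fb(1) T(1) unfolding Pin_def by auto
    show "card {e\<in>Pin cl. tri e = T} \<le> 1 + (if T \<in> Tri cl VV then 2 else 0)"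
    proof (cases "T \<in> Tri cl VV")
      case True
      have "card {e\<in>Pin cl. tri e = T} \<le> card {e\<in>EE. tri e = T}"
        by (rule card_mono) (use finEE in \<open>auto simp: Pin_def\<close>)
      also have "\<dots> \<le> 3" using fb(1) T(1) card3_le by simp
      finally show ?thesis using True by simp
    next
      case False
      have edgesT: "\<And>p. p \<in> VV \<Longrightarrow> en p \<subseteq> T \<Longrightarrow> p = x \<or> p = y \<or> p = w"
        using edges_of_T[OF T(2) T(4) T(3) T(5)] T(1) x_def y_def w_def by blast
      have "\<not> (cl x = cl y \<and> cl y = cl w)"
      proof
        assume h: "cl x = cl y \<and> cl y = cl w"
        have "\<forall>p\<in>VV. \<forall>q\<in>VV. en p \<subseteq> T \<longrightarrow> en q \<subseteq> T \<longrightarrow> cl p = cl q"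
        proof (intro ballI impI)
          fix p q assume "p \<in> VV" "q \<in> VV" "en p \<subseteq> T" "en q \<subseteq> T"
          then have "p = x \<or> p = y \<or> p = w" "q = x \<or> q = y \<or> q = w" using edgesT by auto
          then show "cl p = cl q" using h by auto
        qed
        then have "T \<in> Tri cl VV" unfolding Tri_def mem_Collect_eq using \<open>T \<in> S3\<close> by blast
        then show False using False by simp
      qed
      then have "card {e\<in>{{x,y},{x,w},{y,w}}. \<forall>p\<in>e. \<forall>q\<in>e. cl p = cl q} \<le> 1"
        by (rule three_pairs_le1)
      then have "card {e\<in>Pin cl. tri e = T} \<le> 1"
        using card_mono[OF _ sub] by simp
      then show ?thesis using False by simp
    qed
  qed
  also have "\<dots> = (\<Sum>T\<in>S3. 1) + (\<Sum>T\<in>S3. if T \<in> Tri cl VV then 2 else 0)"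
    by (rule sum.distrib)
  also have "(\<Sum>T\<in>S3. if T \<in> Tri cl VV then 2 else 0) = (\<Sum>T\<in>{T\<in>S3. T \<in> Tri cl VV}. (2::nat))"
    using sum.inter_filter[OF finS3, of "\<lambda>_. 2::nat" "\<lambda>T. T \<in> Tri cl VV"] by simp
  also have "(\<Sum>T\<in>S3. (1::nat)) + (\<Sum>T\<in>{T\<in>S3. T \<in> Tri cl VV}. (2::nat)) = card S3 + 2 * card {T\<in>S3. T \<in> Tri cl VV}"
    by simp
  also have "{T\<in>S3. T \<in> Tri cl VV} = Tri cl VV" unfolding Tri_def by auto
  finally show ?thesis .
qed

end

context KM begin

lemma cost_bound:
  assumes C: "partition_on VV C"
  shows "2 * card S3 \<le> cc_cost VV EE C + 4 * card VV"
proof -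
  define cl where "cl p = (SOME S. S \<in> C \<and> p \<in> S)" for p
  have clp: "cl p \<in> C \<and> p \<in> cl p" if "p \<in> VV" for p
  proof -
    have "\<exists>S. S \<in> C \<and> p \<in> S" using partition_onD1[OF C] that by auto
    then show ?thesis unfolding cl_def by (rule someI_ex)
  qed
  have uniq: "cl p = S" if "S \<in> C" "p \<in> S" for p S
  proof -
    have pV: "p \<in> VV" using partition_onD1[OF C] that by auto
    show ?thesis
    proof (rule ccontr)
      assume "cl p \<noteq> S"
      then have "disjnt (cl p) S" using partition_onD2[OF C] clp[OF pV] that
        unfolding disjoint_def by blast
      then show False using clp[OF pV] that by (auto simp: disjnt_def)
    qed
  qed
  have in_iff: "(\<exists>S\<in>C. {p,q} \<subseteq> S) \<longleftrightarrow> cl p = cl q" if "p \<in> VV" "q \<in> VV" for p q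
    using uniq clp that by (metis insert_subset empty_subsetI)
  have s1: "{e\<in>EE. \<not> (\<exists>S\<in>C. e \<subseteq> S)} = EE - Pin cl"
  proof -
    have eq: "(\<exists>S\<in>C. e \<subseteq> S) \<longleftrightarrow> (\<forall>p\<in>e. \<forall>q\<in>e. cl p = cl q)" if eE: "e \<in> EE" for e
    proof -
      obtain p q where pq: "e = {p,q}" "p \<in> VV" "q \<in> VV" using eE unfolding EE_def by blast
      show ?thesis using in_iff[OF pq(2,3)] pq(1) by auto
    qed
    show ?thesis
    proof (rule set_eqI)
      fix e show "e \<in> {e\<in>EE. \<not> (\<exists>S\<in>C. e \<subseteq> S)} \<longleftrightarrow> e \<in> EE - Pin cl"
        using eq[of e] unfolding Pin_def by blast
    qed
  qed
  have s2: "{e\<in>pairs VV - EE. \<exists>S\<in>C. e \<subseteq> S} = Dis cl VV"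
  proof
    show "{e\<in>pairs VV - EE. \<exists>S\<in>C. e \<subseteq> S} \<subseteq> Dis cl VV"
    proof
      fix e assume e: "e \<in> {e\<in>pairs VV - EE. \<exists>S\<in>C. e \<subseteq> S}"
      then obtain p q where pq: "e = {p,q}" "p \<noteq> q" "p \<in> VV" "q \<in> VV"
        unfolding pairs_def by (auto simp: card_2_iff)
      have "en p \<inter> en q = {}" using e pq EEI by blast
      moreover have "cl p = cl q" using e pq in_iff by blast
      ultimately show "e \<in> Dis cl VV" unfolding Dis_def using pq by blast
    qed
    show "Dis cl VV \<subseteq> {e\<in>pairs VV - EE. \<exists>S\<in>C. e \<subseteq> S}"
    proof
      fix e assume "e \<in> Dis cl VV"
      then obtain p q where pq: "e = {p,q}" "p \<in> VV" "q \<in> VV" "en p \<inter> en q = {}" "cl p = cl q"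
        unfolding Dis_def by blast
      have "p \<noteq> q" using pq en_card by (metis Int_absorb card.empty zero_neq_numeral)
      then have "e \<in> pairs VV" using pq unfolding pairs_def by auto
      moreover have "e \<notin> EE"
      proof
        assume "e \<in> EE"
        then obtain p' q' where "e = {p',q'}" "en p' \<inter> en q' \<noteq> {}" unfolding EE_def by blast
        then show False using pq by (metis doubleton_eq_iff inf_commute)
      qed
      moreover have "\<exists>S\<in>C. e \<subseteq> S" using in_iff pq by blast
      ultimately show "e \<in> {e\<in>pairs VV - EE. \<exists>S\<in>C. e \<subseteq> S}" by blast
    qed
  qed
  have PinE: "Pin cl \<subseteq> EE" unfolding Pin_def by auto
  have cost: "cc_cost VV EE C = (card EE - card (Pin cl)) + card (Dis cl VV)"
    unfolding cc_cost_def s1 s2 using PinE finEE by (simp add: card_Diff_subset finite_subset)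
  have PleE: "card (Pin cl) \<le> card EE" using PinE finEE card_mono by blast
  show ?thesis using cost PleE card_EE card_Pin[of cl] L1[of VV cl, OF subset_refl] by linarith
qed

lemma VV_ne: "VV \<noteq> {}"
proof -
  have "{0,1} \<in> S2" using m4 unfolding S2_def by auto
  then show ?thesis using edVV by blast
qed

lemma opt_bound: "2 * card S3 \<le> cc_opt VV EE + 4 * card VV"
proof -
  let ?K = "{cc_cost VV EE C | C. partition_on VV C}"
  have "?K = cc_cost VV EE ` {C. partition_on VV C}" by auto
  then have fin: "finite ?K" using finitely_many_partition_on[OF finVV] by simp
  have ne: "?K \<noteq> {}" using partition_on_space[OF VV_ne] by blast
  have "cc_opt VV EE \<in> ?K" unfolding cc_opt_def by (rule Min_in[OF fin ne])
  then obtain C where "partition_on VV C" "cc_opt VV EE = cc_cost VV EE C" by auto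
  then show ?thesis using cost_bound by simp
qed

lemma count_rel: "3 * card S3 = (m - 2) * card VV"
proof -
  have "3 * (m choose 3) = m * ((m - 1) choose 2)"
    using binomial_absorption[of 2 m] by (simp add: numeral_3_eq_3)
  moreover have "(m - 2) * (m choose 2) = m * ((m - 1) choose 2)"
    using binomial_absorb_comp[of m 2] by simp
  ultimately show ?thesis using cardS3 cardVV by simp
qed

end

theorem theorem4:
  fixes \<epsilon> :: real
  assumes "\<epsilon> > 0"
  shows "\<exists>(V :: nat set) Ep. cc_instance V Ep \<and> cluster_lp_opt V Ep > 0 \<and>
           real (cc_opt V Ep) \<ge> (4/3 - \<epsilon>) * cluster_lp_opt V Ep"
proof -
  define m where "m = nat \<lceil>8 / \<epsilon>\<rceil> + 4"
  have m4: "4 \<le> m" unfolding m_def by simp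
  interpret K: KM m using m4 by unfold_locales
  have m8: "\<epsilon> * (real m - 2) \<ge> 8"
  proof -
    have h: "real m - 2 \<ge> 8 / \<epsilon>" unfolding m_def by linarith
    have "\<epsilon> * (8 / \<epsilon>) \<le> \<epsilon> * (real m - 2)" by (rule mult_left_mono[OF h]) (use assms in simp)
    moreover have "\<epsilon> * (8 / \<epsilon>) = 8" using assms by simp
    ultimately show ?thesis by simp
  qed
  let ?L = "cluster_lp_opt K.VV K.EE"
  let ?s = "real (card K.S3)" and ?v = "real (card K.VV)"
  have L1: "1 \<le> ?L" and L2: "?L \<le> 3 / 2 * ?s" using K.lp_bounds K.card_EE by auto
  have O0: "real (2 * card K.S3) \<le> real (cc_opt K.VV K.EE + 4 * card K.VV)"
    using K.opt_bound by (simp only: of_nat_le_iff)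
  then have O: "2 * ?s \<le> real (cc_opt K.VV K.EE) + 4 * ?v" by simp
  have R0: "real (3 * card K.S3) = real ((m - 2) * card K.VV)" using K.count_rel by (simp only:)
  have mm: "real (m - 2) = real m - 2" using m4 by (simp add: of_nat_diff)
  have R: "3 * ?s = (real m - 2) * ?v" using R0 mm by simp
  have inst: "cc_instance K.VV K.EE" unfolding cc_instance_def using K.finVV K.EE_pairs by simp
  have "(4/3 - \<epsilon>) * ?L \<le> real (cc_opt K.VV K.EE)"
  proof (cases "4/3 - \<epsilon> \<le> 0")
    case True
    then have "(4/3 - \<epsilon>) * ?L \<le> 0" using L1 by (simp add: mult_nonpos_nonneg)
    then show ?thesis by simp
  next
    case False
    then have a: "(4/3 - \<epsilon>) * ?L \<le> (4/3 - \<epsilon>) * (3 / 2 * ?s)" using L2 by (simp add: mult_left_mono)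
    have b: "(4/3 - \<epsilon>) * (3 / 2 * ?s) = 2 * ?s - 3 / 2 * (\<epsilon> * ?s)" by (simp add: field_simps)
    have c: "3 / 2 * (\<epsilon> * ?s) = 1 / 2 * ((\<epsilon> * (real m - 2)) * ?v)"
    proof -
      have "\<epsilon> * (3 * ?s) = \<epsilon> * ((real m - 2) * ?v)" using R by simp
      then show ?thesis by (simp add: algebra_simps)
    qed
    have d: "(\<epsilon> * (real m - 2)) * ?v \<ge> 8 * ?v" using m8 by (simp add: mult_right_mono)
    show ?thesis using a b c d O by linarith
  qed
  then show ?thesis using inst L1 by (intro exI[of _ K.VV] exI[of _ K.EE]) simp
qed

end
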